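(* Fix a sample $(x,u)$, generative parameters $\theta$, inference parameters $\phi$ and $\epsilon>0$. Suppose there is a function $g:\mathbb{R}^{d_Z}\to\mathbb{R}$ with $\mathrm{SNR}(g)\ge 1/\epsilon$. Then for every $\alpha\in[0,1]$, $$\mathrm{ELBO}_{\theta,\phi}(\alpha;x,u)-\mathrm{ELBO}_{\theta,\phi}(0;x,u)\ \ge\ \mathrm{LB}(\alpha,\epsilon,\Delta_{1-0}(x,u)),$$ where $\mathrm{LB}(\alpha,\epsilon,\Delta):=\alpha\Delta+\alpha\int_{\alpha}^{1}\frac{1-t}{t(1-t)+\epsilon}\,dt+(1-\alpha)\int_{0}^{\alpha}\frac{t}{t(1-t)+\epsilon}\,dt$.
   Context: Observations $x\in\mathbb{R}^{d_X}$, covariates $u\in\mathbb{R}^{d_U}$, latents $z\in\mathbb{R}^{d_Z}$, $d_Z<d_X$. Generative parameters $\theta=(f,T,\lambda)$: mixing function $f$, label prior density $p_{T,\lambda}(z|u)=\prod_{i=1}^{d_Z}\exp(\lambda_i(u)\cdot T_i(z_i)-A(u)+B(z_i))$, decoder density $p_f(x|z)=p_\epsilon(x-f(z))$ for a fixed noise density $p_\epsilon$. Inference parameters $\phi$ determine an encoder density $q_\phi(z|x)$ and posterior density $q_\phi(z|x,u)$. For $\alpha\in[0,1]$, with $m_\alpha=\alpha q_\phi(\cdot|x)+(1-\alpha)q_\phi(\cdot|x,u)$, $\mathrm{ELBO}_{\theta,\phi}(\alpha;x,u)=\mathbb{E}_{z\sim m_\alpha}\log p_f(x|z)-\mathcal{D}_{\mathrm{KL}}(m_\alpha\|p_{T,\lambda}(\cdot|u))$,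 and $\Delta_{1-0}(x,u):=\mathrm{ELBO}_{\theta,\phi}(1;x,u)-\mathrm{ELBO}_{\theta,\phi}(0;x,u)$. The signal-to-noise ratio of $g$ is $$\mathrm{SNR}(g)=\frac{\big(\mathbb{E}_{q_\phi(z|x)}g(z)-\mathbb{E}_{q_\phi(z|x,u)}g(z)\big)^2}{\max\big(\mathrm{Var}_{q_\phi(z|x)}g(z),\ \mathrm{Var}_{q_\phi(z|x,u)}g(z)\big)}.$$ All expectations, variances and divergences appearing are assumed finite. *)

theory Defs
  imports "HOL-Analysis.Analysis"
begin

text \<open>Latent space R^{d_Z} = real^'d, observation space R^{d_X} = real^'dx,
  covariate space R^{d_U} = real^'du. All densities are w.r.t. Lebesgue measure lborel.\<close>

definition is_density :: "('a::euclidean_space \<Rightarrow> real) \<Rightarrow> bool" where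
  "is_density p \<longleftrightarrow> (\<forall>z. 0 \<le> p z) \<and> integrable lborel p \<and> integral\<^sup>L lborel p = 1"

definition prior_dens ::
  "('d::finite \<Rightarrow> real \<Rightarrow> real) \<Rightarrow> ('d \<Rightarrow> real^'du \<Rightarrow> real) \<Rightarrow> (real^'du \<Rightarrow> real)
   \<Rightarrow> (real \<Rightarrow> real) \<Rightarrow> real^'du \<Rightarrow> real^'d \<Rightarrow> real" where
  "prior_dens T lam A B u z = (\<Prod>i\<in>UNIV. exp (lam i u * T i (z $ i) - A u + B (z $ i)))"

definition dec_dens :: "(real^'dx \<Rightarrow> real) \<Rightarrow> (real^'d \<Rightarrow> real^'dx) \<Rightarrow> real^'dx \<Rightarrow> real^'d \<Rightarrow> real" where
  "dec_dens p_eps f x z = p_eps (x - f z)"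

definition mix :: "real \<Rightarrow> ('a \<Rightarrow> real) \<Rightarrow> ('a \<Rightarrow> real) \<Rightarrow> 'a \<Rightarrow> real" where
  "mix \<alpha> q1 q0 z = \<alpha> * q1 z + (1 - \<alpha>) * q0 z"

definition KL :: "('a::euclidean_space \<Rightarrow> real) \<Rightarrow> ('a \<Rightarrow> real) \<Rightarrow> real" where
  "KL m p = (LINT z|lborel. m z * ln (m z / p z))"

definition ELBO ::
  "(real^'dx \<Rightarrow> real) \<Rightarrow> (real^'d \<Rightarrow> real^'dx)
   \<Rightarrow> ('d::finite \<Rightarrow> real \<Rightarrow> real) \<Rightarrow> ('d \<Rightarrow> real^'du \<Rightarrow> real) \<Rightarrow> (real^'du \<Rightarrow> real) \<Rightarrow> (real \<Rightarrow> real)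
   \<Rightarrow> (real^'dx \<Rightarrow> real^'d \<Rightarrow> real) \<Rightarrow> (real^'dx \<Rightarrow> real^'du \<Rightarrow> real^'d \<Rightarrow> real)
   \<Rightarrow> real \<Rightarrow> real^'dx \<Rightarrow> real^'du \<Rightarrow> real" where
  "ELBO p_eps f T lam A B q_enc q_post \<alpha> x u =
     (LINT z|lborel. mix \<alpha> (q_enc x) (q_post x u) z * ln (dec_dens p_eps f x z))
     - KL (mix \<alpha> (q_enc x) (q_post x u)) (prior_dens T lam A B u)"

definition Delta10 where
  "Delta10 p_eps f T lam A B q_enc q_post x u =
     ELBO p_eps f T lam A B q_enc q_post 1 x u - ELBO p_eps f T lam A B q_enc q_post 0 x u"

definition expect :: "('a::euclidean_space \<Rightarrow> real) \<Rightarrow> ('a \<Rightarrow> real) \<Rightarrow> real" where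
  "expect q g = (LINT z|lborel. q z * g z)"

definition var :: "('a::euclidean_space \<Rightarrow> real) \<Rightarrow> ('a \<Rightarrow> real) \<Rightarrow> real" where
  "var q g = (LINT z|lborel. q z * (g z)\<^sup>2) - (expect q g)\<^sup>2"

definition SNR :: "('a::euclidean_space \<Rightarrow> real) \<Rightarrow> ('a \<Rightarrow> real) \<Rightarrow> ('a \<Rightarrow> real) \<Rightarrow> real" where
  "SNR q1 q0 g = (expect q1 g - expect q0 g)\<^sup>2 / max (var q1 g) (var q0 g)"

definition LB :: "real \<Rightarrow> real \<Rightarrow> real \<Rightarrow> real" where
  "LB \<alpha> \<epsilon> \<Delta> = \<alpha> * \<Delta>
     + \<alpha> * integral {\<alpha>..1} (\<lambda>t. (1 - t) / (t * (1 - t) + \<epsilon>))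
     + (1 - \<alpha>) * integral {0..\<alpha>} (\<lambda>t. t / (t * (1 - t) + \<epsilon>))"

end

theory Submission
  imports Defs "HOL-Real_Asymp.Real_Asymp"
begin

lemma xlnx_cont: "continuous_on {0..} (\<lambda>x::real. x * ln x)"
proof -
  have "continuous (at x within {0..}) (\<lambda>x::real. x * ln x)" if "x \<ge> 0" for x
  proof (cases "x = 0")
    case True
    have "((\<lambda>x::real. x * ln x) \<longlongrightarrow> 0) (at_right 0)" by real_asymp
    then show ?thesis using True by (simp add: continuous_within at_within_Ici_at_right)
  next
    case False
    then have "x > 0" using that by simp
    then have "isCont (\<lambda>x::real. x * ln x) x" by (auto intro!: continuous_intros)
    then show ?thesis using continuous_at_imp_continuous_at_within by blast
  qed
  then show ?thesis by (simp add: continuous_on_eq_continuous_within)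
qed

definition Lop :: "(real \<Rightarrow> real) \<Rightarrow> real \<Rightarrow> real" where
  "Lop \<rho> s = (1 - s) * integral {0..s} (\<lambda>t. t * \<rho> t) + s * integral {s..1} (\<lambda>t. (1 - t) * \<rho> t)"

definition Phi :: "real \<Rightarrow> real \<Rightarrow> real \<Rightarrow> real" where
  "Phi a b s = (1 - s) * (a * ln a) + s * (b * ln b) - ((1 - s) * a + s * b) * ln ((1 - s) * a + s * b)"

lemma Lop_deriv:
  assumes c: "continuous_on {0..1} \<rho>" and s: "s \<in> {0..1}"
  shows "(Lop \<rho> has_real_derivative
     (- integral {0..s} (\<lambda>t. t * \<rho> t) + integral {s..1} (\<lambda>t. (1 - t) * \<rho> t))) (at s within {0..1})"
proof -
  have c1: "continuous_on {0..1} (\<lambda>t. t * \<rho> t)" using c by (auto intro!: continuous_intros)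
  have c2: "continuous_on {0..1} (\<lambda>t. (1 - t) * \<rho> t)" using c by (auto intro!: continuous_intros)
  note d1 = integral_has_real_derivative[OF c1 s]
  note d2 = integral_has_real_derivative'[OF c2 s]
  have ea: "((\<lambda>s::real. 1 - s) has_real_derivative -1) (at s within {0..1})"
    by (auto intro!: derivative_eq_intros)
  have eb: "((\<lambda>s::real. s) has_real_derivative 1) (at s within {0..1})"
    by (auto intro!: derivative_eq_intros)
  note DERIV_add[OF DERIV_mult[OF ea d1] DERIV_mult[OF eb d2]]
  then show ?thesis unfolding Lop_def by (rule DERIV_cong) (simp add: algebra_simps)
qed

lemma Lop_deriv2:
  assumes c: "continuous_on {0..1} \<rho>" and s: "s \<in> {0..1}"
  shows "((\<lambda>s. - integral {0..s} (\<lambda>t. t * \<rho> t) + integral {s..1} (\<lambda>t. (1 - t) * \<rho> t))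
     has_real_derivative (- \<rho> s)) (at s within {0..1})"
proof -
  have c1: "continuous_on {0..1} (\<lambda>t. t * \<rho> t)" using c by (auto intro!: continuous_intros)
  have c2: "continuous_on {0..1} (\<lambda>t. (1 - t) * \<rho> t)" using c by (auto intro!: continuous_intros)
  note d1 = integral_has_real_derivative[OF c1 s]
  note d2 = integral_has_real_derivative'[OF c2 s]
  have "((\<lambda>s. - integral {0..s} (\<lambda>t. t * \<rho> t) + integral {s..1} (\<lambda>t. (1 - t) * \<rho> t))
     has_real_derivative (- (s * \<rho> s) + - ((1 - s) * \<rho> s))) (at s within {0..1})"
    by (intro DERIV_add DERIV_minus d1 d2)
  then show ?thesis by (rule DERIV_cong) (simp add: algebra_simps)
qed


definition dPhi :: "real \<Rightarrow> real \<Rightarrow> real \<Rightarrow> real" where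
  "dPhi a b s = b * ln b - a * ln a - (b - a) * (ln ((1 - s) * a + s * b) + 1)"

lemma Phi_deriv:
  assumes a: "a \<ge> 0" and b: "b \<ge> 0" and s: "0 < s" "s < 1"
  shows "(Phi a b has_real_derivative dPhi a b s) (at s)"
    and "(dPhi a b has_real_derivative (- ((b - a) * (b - a) / ((1 - s) * a + s * b)))) (at s)"
proof -
  show "(Phi a b has_real_derivative dPhi a b s) (at s)"
  proof (cases "a = 0 \<and> b = 0")
    case True
    then have "Phi a b = (\<lambda>_. 0)" by (auto simp: Phi_def)
    moreover have "dPhi a b s = 0" using True by (simp add: dPhi_def)
    ultimately show ?thesis by simp
  next
    case False
    then have m: "(1 - s) * a + s * b > 0" using a b s
      by (metis add.commute add_pos_nonneg diff_gt_0_iff_gt less_eq_real_def mult_nonneg_nonneg mult_pos_pos)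
    have "((\<lambda>s. (1 - s) * (a * ln a) + s * (b * ln b) - ((1 - s) * a + s * b) * ln ((1 - s) * a + s * b))
      has_real_derivative ((-1) * (a * ln a) + 1 * (b * ln b) - ((-a + b) * ln ((1 - s) * a + s * b) + ((1 - s) * a + s * b) * ((-a + b) / ((1 - s) * a + s * b))))) (at s)"
      using m by (auto intro!: derivative_eq_intros)
    then show ?thesis unfolding Phi_def dPhi_def
      by (rule DERIV_cong) (use m in \<open>simp add: field_simps\<close>)
  qed
  show "(dPhi a b has_real_derivative (- ((b - a) * (b - a) / ((1 - s) * a + s * b)))) (at s)"
  proof (cases "a = 0 \<and> b = 0")
    case True
    then have "dPhi a b = (\<lambda>_. 0)" by (auto simp: dPhi_def)
    then show ?thesis using True by simp
  next
    case False
    then have m: "(1 - s) * a + s * b > 0" using a b s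
      by (metis add.commute add_pos_nonneg diff_gt_0_iff_gt less_eq_real_def mult_nonneg_nonneg mult_pos_pos)
    have "((\<lambda>s. b * ln b - a * ln a - (b - a) * (ln ((1 - s) * a + s * b) + 1))
      has_real_derivative (0 - 0 - (b - a) * ((-a + b) / ((1 - s) * a + s * b) + 0))) (at s)"
      using m by (auto intro!: derivative_eq_intros)
    then show ?thesis unfolding dPhi_def
      by (rule DERIV_cong) (simp add: field_simps)
  qed
qed


lemma Phi_cont: assumes "a \<ge> 0" "b \<ge> 0" shows "continuous_on {0..1} (Phi a b)"
proof -
  have m: "continuous_on {0..1} (\<lambda>s. ((1 - s) * a + s * b) * ln ((1 - s) * a + s * b))"
    by (rule continuous_on_compose2[OF xlnx_cont, of _ "\<lambda>s. (1 - s) * a + s * b"])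
       (use assms in \<open>auto intro!: continuous_intros\<close>)
  show ?thesis unfolding Phi_def by (intro continuous_intros m)
qed

lemma Lop_cont: assumes "continuous_on {0..1} \<rho>" shows "continuous_on {0..1} (Lop \<rho>)"
  using Lop_deriv[OF assms] DERIV_continuous continuous_on_eq_continuous_within by blast

lemma interior_deriv:
  assumes "(f has_real_derivative D) (at s within {0..1})" "0 < s" "s < (1::real)"
  shows "(f has_real_derivative D) (at s)"
  using assms at_within_interior[of s "{0..1::real}"] by simp

lemma P:
  fixes a b \<alpha> :: real
  assumes a: "a \<ge> 0" and b: "b \<ge> 0" and c: "continuous_on {0..1} \<rho>"
    and le: "\<And>t. 0 < t \<Longrightarrow> t < 1 \<Longrightarrow> \<rho> t \<le> (b - a) * (b - a) / ((1 - t) * a + t * b)"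
    and al: "\<alpha> \<in> {0..1}"
  shows "Lop \<rho> \<alpha> \<le> Phi a b \<alpha>"
proof -
  define H where "H s = Phi a b s - Lop \<rho> s" for s
  define L1 where "L1 s = - integral {0..s} (\<lambda>t. t * \<rho> t) + integral {s..1} (\<lambda>t. (1 - t) * \<rho> t)" for s
  define H1 where "H1 s = dPhi a b s - L1 s" for s
  have Hc: "continuous_on {0..1} H" unfolding H_def
    by (intro continuous_intros Phi_cont Lop_cont a b c)
  have dH: "(H has_real_derivative H1 s) (at s)" if "0 < s" "s < 1" for s
    unfolding H_def H1_def L1_def
    by (intro DERIV_diff Phi_deriv interior_deriv[OF Lop_deriv] a b c that) (use that in auto)
  have dH1: "(H1 has_real_derivative (- ((b - a) * (b - a) / ((1 - s) * a + s * b)) - - \<rho> s)) (at s)"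
    if "0 < s" "s < 1" for s
    unfolding H1_def L1_def
    by (intro DERIV_diff Phi_deriv interior_deriv[OF Lop_deriv2] a b c that) (use that in auto)
  have H1mono: "H1 y \<le> H1 x" if "0 < x" "x \<le> y" "y < 1" for x y
  proof (rule DERIV_nonpos_imp_nonincreasing[OF that(2)])
    fix z assume "x \<le> z" "z \<le> y"
    then have z: "0 < z" "z < 1" using that by auto
    show "\<exists>d. DERIV H1 z :> d \<and> d \<le> 0"
      using dH1[OF z] le[OF z] by (intro exI[of _ "- ((b - a) * (b - a) / ((1 - z) * a + z * b)) - - \<rho> z"]) auto
  qed
  have H0: "H 0 = 0" by (simp add: H_def Phi_def Lop_def)
  have H1': "H 1 = 0" by (simp add: H_def Phi_def Lop_def)
  have "H \<alpha> \<ge> 0"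
  proof (cases "\<alpha> = 0 \<or> \<alpha> = 1")
    case True then show ?thesis using H0 H1' by auto
  next
    case False
    then have al': "0 < \<alpha>" "\<alpha> < 1" using al by auto
    obtain l1 z1 where z1: "0 < z1" "z1 < \<alpha>" "DERIV H z1 :> l1" "H \<alpha> - H 0 = (\<alpha> - 0) * l1"
    proof -
      have "continuous_on {0..\<alpha>} H" by (rule continuous_on_subset[OF Hc]) (use al' in auto)
      moreover have "H differentiable (at x)" if "0 < x" "x < \<alpha>" for x
        using dH[of x] that al' unfolding real_differentiable_def by auto
      ultimately show ?thesis using MVT[OF al'(1), of H] that by blast
    qed
    obtain l2 z2 where z2: "\<alpha> < z2" "z2 < 1" "DERIV H z2 :> l2" "H 1 - H \<alpha> = (1 - \<alpha>) * l2"
    proof -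
      have "continuous_on {\<alpha>..1} H" by (rule continuous_on_subset[OF Hc]) (use al' in auto)
      moreover have "H differentiable (at x)" if "\<alpha> < x" "x < 1" for x
        using dH[of x] that al' unfolding real_differentiable_def by auto
      ultimately show ?thesis using MVT[OF al'(2), of H] that by blast
    qed
    have "l1 = H1 z1" by (rule DERIV_unique[OF z1(3) dH]) (use z1 al' in auto)
    moreover have "l2 = H1 z2" by (rule DERIV_unique[OF z2(3) dH]) (use z2 al' in auto)
    moreover have "H1 z2 \<le> H1 z1" using H1mono z1 z2 by auto
    ultimately have "l2 \<le> l1" by simp
    then have "\<alpha> * (1 - \<alpha>) * l2 \<le> \<alpha> * (1 - \<alpha>) * l1" using al' by (intro mult_left_mono) auto
    moreover have "H \<alpha> = \<alpha> * l1" using z1(4) H0 by simp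
    moreover have "- H \<alpha> = (1 - \<alpha>) * l2" using z2(4) H1' by simp
    ultimately have "(1 - \<alpha>) * H \<alpha> \<ge> \<alpha> * (- H \<alpha>)" by (simp add: algebra_simps)
    then show ?thesis by (simp add: algebra_simps)
  qed
  then show ?thesis by (simp add: H_def)
qed


lemma Lop_sum:
  assumes c: "\<And>j. j \<in> J \<Longrightarrow> continuous_on {0..1} (cc j)" and fin: "finite J" and al: "\<alpha> \<in> {0..1}"
  shows "Lop (\<lambda>t. \<Sum>j\<in>J. cc j t * v j) \<alpha> = (\<Sum>j\<in>J. Lop (cc j) \<alpha> * v j)"
proof -
  have i1: "(\<lambda>t. t * cc j t * v j) integrable_on {0..\<alpha>}" if "j \<in> J" for j
    by (rule integrable_continuous_interval, rule continuous_on_subset[of "{0..1}"])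
       (use c[OF that] al in \<open>auto intro!: continuous_intros\<close>)
  have i2: "(\<lambda>t. (1 - t) * cc j t * v j) integrable_on {\<alpha>..1}" if "j \<in> J" for j
    by (rule integrable_continuous_interval, rule continuous_on_subset[of "{0..1}"])
       (use c[OF that] al in \<open>auto intro!: continuous_intros\<close>)
  have e1: "integral {0..\<alpha>} (\<lambda>t. t * (\<Sum>j\<in>J. cc j t * v j)) = (\<Sum>j\<in>J. integral {0..\<alpha>} (\<lambda>t. t * cc j t * v j))"
    by (subst integral_sum[symmetric]) (use i1 fin in \<open>auto simp: sum_distrib_left mult.assoc\<close>)
  have e2: "integral {\<alpha>..1} (\<lambda>t. (1 - t) * (\<Sum>j\<in>J. cc j t * v j)) = (\<Sum>j\<in>J. integral {\<alpha>..1} (\<lambda>t. (1 - t) * cc j t * v j))"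
    by (subst integral_sum[symmetric]) (use i2 fin in \<open>auto simp: sum_distrib_left mult.assoc\<close>)
  have "Lop (\<lambda>t. \<Sum>j\<in>J. cc j t * v j) \<alpha> = (1 - \<alpha>) * (\<Sum>j\<in>J. integral {0..\<alpha>} (\<lambda>t. t * cc j t) * v j)
     + \<alpha> * (\<Sum>j\<in>J. integral {\<alpha>..1} (\<lambda>t. (1 - t) * cc j t) * v j)"
    unfolding Lop_def e1 e2 integral_mult_left ..
  also have "\<dots> = (\<Sum>j\<in>J. Lop (cc j) \<alpha> * v j)"
    unfolding sum_distrib_left sum.distrib[symmetric] Lop_def
    by (rule sum.cong) (auto simp: algebra_simps)
  finally show ?thesis .
qed

lemma Lop_mono:
  assumes c1: "continuous_on {0..1} \<rho>1" and c2: "continuous_on {0..1} \<rho>2"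
    and le: "\<And>t. t \<in> {0..1} \<Longrightarrow> \<rho>1 t \<le> \<rho>2 t" and al: "\<alpha> \<in> {0..1}"
  shows "Lop \<rho>1 \<alpha> \<le> Lop \<rho>2 \<alpha>"
proof -
  have a: "integral {0..\<alpha>} (\<lambda>t. t * \<rho>1 t) \<le> integral {0..\<alpha>} (\<lambda>t. t * \<rho>2 t)"
    by (rule integral_le; (rule integrable_continuous_interval, rule continuous_on_subset[of "{0..1}"])?)
       (use c1 c2 al le in \<open>auto intro!: continuous_intros mult_left_mono\<close>)
  have b: "integral {\<alpha>..1} (\<lambda>t. (1 - t) * \<rho>1 t) \<le> integral {\<alpha>..1} (\<lambda>t. (1 - t) * \<rho>2 t)"
    by (rule integral_le; (rule integrable_continuous_interval, rule continuous_on_subset[of "{0..1}"])?)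
       (use c1 c2 al le in \<open>auto intro!: continuous_intros mult_left_mono\<close>)
  show ?thesis unfolding Lop_def using a b al
    by (intro add_mono mult_left_mono) auto
qed


lemma quad_bound:
  fixes m d h :: real
  assumes "m \<ge> 0" "m = 0 \<Longrightarrow> d = 0"
  shows "2 * d * h - m * h\<^sup>2 \<le> d * d / m"
proof (cases "m = 0")
  case True then show ?thesis using assms by simp
next
  case False
  then have m: "m > 0" using assms by simp
  have "d * d / m - (2 * d * h - m * h\<^sup>2) = (d - m * h)\<^sup>2 / m"
    using m by (simp add: field_simps power2_eq_square)
  moreover have "(d - m * h)\<^sup>2 / m \<ge> 0" using m by simp
  ultimately show ?thesis by linarith
qed

lemma mlnm:
  fixes m p :: real
  assumes "m \<ge> 0" "p > 0"
  shows "m * ln (m / p) = m * ln m - m * ln p"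
proof (cases "m = 0")
  case False
  then show ?thesis using assms by (simp add: ln_div algebra_simps)
qed simp

theorem lemma3:
  fixes x :: "real^'dx" and u :: "real^'du"
    and f :: "real^'d \<Rightarrow> real^'dx" and p_eps :: "real^'dx \<Rightarrow> real"
    and T :: "'d \<Rightarrow> real \<Rightarrow> real" and lam :: "'d \<Rightarrow> real^'du \<Rightarrow> real"
    and A :: "real^'du \<Rightarrow> real" and B :: "real \<Rightarrow> real"
    and q_enc :: "real^'dx \<Rightarrow> real^'d \<Rightarrow> real"
    and q_post :: "real^'dx \<Rightarrow> real^'du \<Rightarrow> real^'d \<Rightarrow> real"
    and g :: "real^'d \<Rightarrow> real" and \<epsilon> \<alpha> :: real
  assumes dims: "CARD('d) < CARD('dx)"
    and noise: "is_density p_eps"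
    and prior: "is_density (prior_dens T lam A B u)"
    and enc: "is_density (q_enc x)"
    and post: "is_density (q_post x u)"
    and fin_lik: "\<forall>a\<in>{0..1}. integrable lborel
        (\<lambda>z. mix a (q_enc x) (q_post x u) z * ln (dec_dens p_eps f x z))"
    and fin_lik_pos: "AE z in lborel. (0 < q_enc x z \<or> 0 < q_post x u z) \<longrightarrow> 0 < dec_dens p_eps f x z"
    and fin_KL: "\<forall>a\<in>{0..1}. integrable lborel
        (\<lambda>z. mix a (q_enc x) (q_post x u) z
              * ln (mix a (q_enc x) (q_post x u) z / prior_dens T lam A B u z))"
    and fin_g: "integrable lborel (\<lambda>z. q_enc x z * g z)" "integrable lborel (\<lambda>z. q_post x u z * g z)"
               "integrable lborel (\<lambda>z. q_enc x z * (g z)\<^sup>2)" "integrable lborel (\<lambda>z. q_post x u z * (g z)\<^sup>2)"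
    and eps: "\<epsilon> > 0"
    and snr: "SNR (q_enc x) (q_post x u) g \<ge> 1 / \<epsilon>"
    and alpha: "\<alpha> \<in> {0..1}"
  shows "ELBO p_eps f T lam A B q_enc q_post \<alpha> x u - ELBO p_eps f T lam A B q_enc q_post 0 x u
         \<ge> LB \<alpha> \<epsilon> (Delta10 p_eps f T lam A B q_enc q_post x u)"
proof -
  define q1 where "q1 = q_enc x"
  define q0 where "q0 = q_post x u"
  define p where "p = prior_dens T lam A B u"
  define E1 where "E1 = expect q1 g"
  define E0 where "E0 = expect q0 g"
  define D where "D = E1 - E0"
  define V1 where "V1 = var q1 g"
  define V0 where "V0 = var q0 g"
  define M where "M = max V1 V0"
  have q1nn: "\<And>z. q1 z \<ge> 0" and q0nn: "\<And>z. q0 z \<ge> 0"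
    using enc post by (auto simp: is_density_def q1_def q0_def)
  have q1int: "integrable lborel q1" and q0int: "integrable lborel q0"
    using enc post by (auto simp: is_density_def q1_def q0_def)
  have q1one: "(LINT z|lborel. q1 z) = 1" and q0one: "(LINT z|lborel. q0 z) = 1"
    using enc post by (auto simp: is_density_def q1_def q0_def)
  have ppos: "\<And>z. p z > 0" unfolding p_def prior_dens_def by (intro prod_pos) auto
  have snr': "1 / \<epsilon> \<le> D\<^sup>2 / M"
    using snr by (simp add: SNR_def q1_def q0_def E1_def E0_def D_def M_def V1_def V0_def)
  have Mpos: "M > 0"
  proof (rule ccontr)
    assume "\<not> M > 0"
    then have "D\<^sup>2 / M \<le> 0" by (simp add: divide_nonneg_nonpos)
    moreover have "1 / \<epsilon> > 0" using eps by simp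
    ultimately show False using snr' by linarith
  qed
  have MD: "M \<le> \<epsilon> * D\<^sup>2"
    using snr' Mpos eps by (simp add: field_simps)
  have Dnz: "D \<noteq> 0" using MD Mpos by auto
  define w where "w t = 1 / (t * (1 - t) + \<epsilon>)" for t
  define \<beta> where "\<beta> t = w t / D" for t
  define c where "c t = t * E1 + (1 - t) * E0" for t
  define cc where "cc j t = [2 * \<beta> t * c t - (1 - t) * (\<beta> t)\<^sup>2 * (c t)\<^sup>2,
      - 2 * \<beta> t * c t - t * (\<beta> t)\<^sup>2 * (c t)\<^sup>2,
      - 2 * \<beta> t + 2 * c t * (1 - t) * (\<beta> t)\<^sup>2,
      2 * \<beta> t + 2 * c t * t * (\<beta> t)\<^sup>2,
      - (1 - t) * (\<beta> t)\<^sup>2, - t * (\<beta> t)\<^sup>2] ! j" for j t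
  define \<mu> where "\<mu> j z = [q0 z, q1 z, q0 z * g z, q1 z * g z, q0 z * (g z)\<^sup>2, q1 z * (g z)\<^sup>2] ! j" for j z
  define I where "I j = (LINT z|lborel. \<mu> j z)" for j
  have six: "j \<in> {..<6} \<Longrightarrow> j = 0 \<or> j = 1 \<or> j = 2 \<or> j = 3 \<or> j = 4 \<or> j = (5::nat)" for j
    by auto
  have den: "t * (1 - t) + \<epsilon> > 0" if "t \<in> {0..1}" for t
    using that eps by (auto intro!: add_nonneg_pos mult_nonneg_nonneg)
  have wc: "continuous_on {0..1} w" unfolding w_def
    by (intro continuous_intros) (use den in force)
  have ccc: "continuous_on {0..1} (cc j)" if "j \<in> {..<6}" for j
  proof -
    have bc: "continuous_on {0..1} \<beta>" unfolding \<beta>_def by (intro continuous_intros wc) (use Dnz in auto)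
    have cc': "continuous_on {0..1} c" unfolding c_def by (intro continuous_intros)
    show ?thesis using six[OF that] unfolding cc_def
      by (elim disjE) (simp_all, (intro continuous_intros bc cc')+)
  qed
  have \<mu>int: "integrable lborel (\<mu> j)" if "j \<in> {..<6}" for j
    using six[OF that] fin_g q1int q0int unfolding \<mu>_def q1_def q0_def
    by (elim disjE) simp_all
  have I0: "I 0 = 1" and I1: "I 1 = 1" and I2: "I 2 = E0" and I3: "I 3 = E1"
    and I4: "I 4 = V0 + E0\<^sup>2" and I5: "I 5 = V1 + E1\<^sup>2"
    by (simp_all add: I_def \<mu>_def q0one q1one E0_def E1_def V0_def V1_def var_def expect_def)
  have sum6: "(\<Sum>j\<in>{..<6::nat}. f j) = f 0 + f 1 + f 2 + f 3 + f 4 + (f 5 :: real)" for f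
    by (simp add: eval_nat_numeral)
  have wle: "w t \<le> (\<Sum>j\<in>{..<6}. cc j t * I j)" if t: "t \<in> {0..1}" for t
  proof -
    define Q where "Q = (1 - t) * V0 + t * V1 + t * (1 - t) * D\<^sup>2"
    have "(\<Sum>j\<in>{..<6}. cc j t * I j) = 2 * \<beta> t * D - (\<beta> t)\<^sup>2 * Q"
      unfolding sum6 I0 I1 I2 I3 I4 I5 Q_def D_def
      by (simp add: cc_def c_def algebra_simps power2_eq_square)
    moreover have "(1 - t) * V0 + t * V1 \<le> M"
    proof -
      have "(1 - t) * V0 \<le> (1 - t) * M" using t by (intro mult_left_mono) (auto simp: M_def)
      moreover have "t * V1 \<le> t * M" using t by (intro mult_left_mono) (auto simp: M_def)
      ultimately show ?thesis by (simp add: algebra_simps)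
    qed
    then have "Q \<le> D\<^sup>2 * (t * (1 - t) + \<epsilon>)" using MD unfolding Q_def by (simp add: algebra_simps)
    then have "(\<beta> t)\<^sup>2 * Q \<le> (\<beta> t)\<^sup>2 * (D\<^sup>2 * (t * (1 - t) + \<epsilon>))" by (simp add: mult_left_mono)
    moreover have "(\<beta> t)\<^sup>2 * (D\<^sup>2 * (t * (1 - t) + \<epsilon>)) = w t"
    proof -
      have "(1 / X / D)\<^sup>2 * (D\<^sup>2 * X) = 1 / X" if "X > 0" for X
        using Dnz that by (simp add: field_simps power2_eq_square)
      from this[OF den[OF t]] show ?thesis by (simp add: \<beta>_def w_def)
    qed
    moreover have "2 * \<beta> t * D = 2 * w t" using Dnz by (simp add: \<beta>_def)
    ultimately show ?thesis by linarith
  qed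
  have pw: "(\<Sum>j\<in>{..<6}. Lop (cc j) \<alpha> * \<mu> j z) \<le> Phi (q0 z) (q1 z) \<alpha>" for z
  proof -
    define a where "a = q0 z"
    define b where "b = q1 z"
    have a: "a \<ge> 0" and b: "b \<ge> 0" using q0nn q1nn by (auto simp: a_def b_def)
    define \<rho> where "\<rho> t = (\<Sum>j\<in>{..<6}. cc j t * \<mu> j z)" for t
    have eq: "Lop \<rho> \<alpha> = (\<Sum>j\<in>{..<6}. Lop (cc j) \<alpha> * \<mu> j z)"
      unfolding \<rho>_def by (rule Lop_sum[OF ccc _ alpha]) auto
    have \<rho>c: "continuous_on {0..1} \<rho>" unfolding \<rho>_def
      by (intro continuous_on_sum continuous_intros ccc) auto
    have le: "\<rho> t \<le> (b - a) * (b - a) / ((1 - t) * a + t * b)" if t: "0 < t" "t < 1" for t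
    proof -
      define h where "h = \<beta> t * (g z - c t)"
      have "\<rho> t = 2 * (b - a) * h - ((1 - t) * a + t * b) * h\<^sup>2"
        unfolding \<rho>_def sum6 h_def a_def b_def
        by (simp add: cc_def \<mu>_def algebra_simps power2_eq_square)
      moreover have "2 * (b - a) * h - ((1 - t) * a + t * b) * h\<^sup>2 \<le> (b - a) * (b - a) / ((1 - t) * a + t * b)"
      proof (rule quad_bound)
        show "0 \<le> (1 - t) * a + t * b" using a b t by simp
        assume "(1 - t) * a + t * b = 0"
        moreover have "(1 - t) * a \<ge> 0" "t * b \<ge> 0" using a b t by auto
        ultimately have "(1 - t) * a = 0" "t * b = 0" by linarith+
        then show "b - a = 0" using t by simp
      qed
      ultimately show ?thesis by simp
    qed
    have "Lop \<rho> \<alpha> \<le> Phi a b \<alpha>" by (rule P[OF a b \<rho>c le alpha])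
    then show ?thesis using eq by (simp add: a_def b_def)
  qed
  define \<phi> where "\<phi> s z = mix s q1 q0 z * ln (mix s q1 q0 z / p z)" for s z
  define ll where "ll z = ln (dec_dens p_eps f x z)" for z
  define lik where "lik s = (LINT z|lborel. mix s q1 q0 z * ll z)" for s
  define K where "K s = (LINT z|lborel. \<phi> s z)" for s
  have ELBOeq: "ELBO p_eps f T lam A B q_enc q_post s x u = lik s - K s" for s
    by (simp add: ELBO_def KL_def q1_def q0_def p_def \<phi>_def ll_def lik_def K_def)
  have al: "\<alpha> \<in> {0..1}" using alpha .
  have likint: "integrable lborel (\<lambda>z. mix s q1 q0 z * ll z)" if "s \<in> {0..1}" for s
    using fin_lik that by (simp add: q1_def q0_def ll_def)
  have Kint: "integrable lborel (\<phi> s)" if "s \<in> {0..1}" for s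
    using fin_KL that unfolding \<phi>_def[abs_def] q1_def q0_def p_def by simp
  have lik_lin: "lik \<alpha> = \<alpha> * lik 1 + (1 - \<alpha>) * lik 0"
  proof -
    have "lik \<alpha> = (LINT z|lborel. \<alpha> * (mix 1 q1 q0 z * ll z) + (1 - \<alpha>) * (mix 0 q1 q0 z * ll z))"
      unfolding lik_def by (rule arg_cong[where f = "integral\<^sup>L lborel"], rule ext) (simp add: mix_def algebra_simps)
    also have "\<dots> = \<alpha> * lik 1 + (1 - \<alpha>) * lik 0"
      unfolding lik_def using likint[of 1] likint[of 0] by (simp add: integral_add)
    finally show ?thesis .
  qed
  define G where "G z = \<alpha> * \<phi> 1 z + (1 - \<alpha>) * \<phi> 0 z - \<phi> \<alpha> z" for z
  have Gint: "integrable lborel G" unfolding G_def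
    using Kint[of 1] Kint[of 0] Kint[OF al] by auto
  have GK: "(LINT z|lborel. G z) = \<alpha> * K 1 + (1 - \<alpha>) * K 0 - K \<alpha>"
    unfolding G_def K_def using Kint[of 1] Kint[of 0] Kint[OF al] by (simp add: integral_add integral_diff)
  have GPhi: "G z = Phi (q0 z) (q1 z) \<alpha>" for z
  proof -
    have m1: "mix 1 q1 q0 z = q1 z" "mix 0 q1 q0 z = q0 z"
      "mix \<alpha> q1 q0 z = (1 - \<alpha>) * q0 z + \<alpha> * q1 z" by (simp_all add: mix_def)
    have nn: "(1 - \<alpha>) * q0 z + \<alpha> * q1 z \<ge> 0" using al q0nn[of z] q1nn[of z] by auto
    have "G z = \<alpha> * (q1 z * ln (q1 z) - q1 z * ln (p z)) + (1 - \<alpha>) * (q0 z * ln (q0 z) - q0 z * ln (p z))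
       - (((1 - \<alpha>) * q0 z + \<alpha> * q1 z) * ln ((1 - \<alpha>) * q0 z + \<alpha> * q1 z)
          - ((1 - \<alpha>) * q0 z + \<alpha> * q1 z) * ln (p z))"
      unfolding G_def \<phi>_def m1 mlnm[OF nn ppos[of z]] mlnm[OF q0nn ppos[of z]] mlnm[OF q1nn ppos[of z]] ..
    also have "\<dots> = Phi (q0 z) (q1 z) \<alpha>" unfolding Phi_def by (simp add: algebra_simps)
    finally show ?thesis .
  qed
  have sumint: "(LINT z|lborel. (\<Sum>j\<in>{..<6}. Lop (cc j) \<alpha> * \<mu> j z)) = (\<Sum>j\<in>{..<6}. Lop (cc j) \<alpha> * I j)"
    unfolding I_def using \<mu>int by (subst Bochner_Integration.integral_sum) auto
  have sumint': "integrable lborel (\<lambda>z. \<Sum>j\<in>{..<6}. Lop (cc j) \<alpha> * \<mu> j z)"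
    using \<mu>int by auto
  have "(\<Sum>j\<in>{..<6}. Lop (cc j) \<alpha> * I j) \<le> (LINT z|lborel. G z)"
    unfolding sumint[symmetric] by (rule integral_mono[OF sumint' Gint]) (simp add: GPhi pw)
  moreover have "(\<Sum>j\<in>{..<6}. Lop (cc j) \<alpha> * I j) = Lop (\<lambda>t. \<Sum>j\<in>{..<6}. cc j t * I j) \<alpha>"
    by (rule Lop_sum[symmetric, OF ccc _ al]) auto
  moreover have "Lop w \<alpha> \<le> Lop (\<lambda>t. \<Sum>j\<in>{..<6}. cc j t * I j) \<alpha>"
    by (rule Lop_mono[OF wc _ wle al]) (intro continuous_on_sum continuous_intros ccc; simp)
  ultimately have main: "Lop w \<alpha> \<le> \<alpha> * K 1 + (1 - \<alpha>) * K 0 - K \<alpha>" using GK by linarith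
  have LBeq: "LB \<alpha> \<epsilon> \<Delta> = \<alpha> * \<Delta> + Lop w \<alpha>" for \<Delta>
    unfolding LB_def Lop_def w_def by (simp add: algebra_simps)
  show ?thesis
    unfolding LBeq Delta10_def ELBOeq using main lik_lin by (simp add: algebra_simps)
qed
end
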